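(* Let $\mathbf{X}=(X_n)_{n\ge0}$ be a second-order stationary process with spectral density $f_X$ on $[-\pi,\pi)$ having finitely many, $N_X\ge1$, singular frequencies. Let $k\ge1$ be an integer and $Y_n=X_{kn}$ (deterministic sampling), and let $N_Y$ be the number of singular frequencies of the spectral density $f_Y$ of $\mathbf{Y}$. Then (a) $1\le N_Y\le N_X$; (b) $N_Y<N_X$ if and only if $f_X$ has at least two singular frequencies $\lambda_0\ne\lambda_1$ such that $\lambda_0-\lambda_1=\frac{2\pi j^*}{k}$ for some integer $j^*$.
   Context: A singular frequency of a spectral density $f$ on $[-\pi,\pi)$ is a point $\lambda_0\in[-\pi,\pi)$ at which $f$ is unbounded (i.e. $f$ is unbounded on every neighbourhood of $\lambda_0$). For deterministic sampling with step $k$ the spectral density of $\mathbf{Y}$ is $f_Y(\lambda)=\frac{1}{2\ell+1}\sum_{j=-\ell}^{\ell}f_X\big(\frac{\lambda-2\pi j}{2\ell+1}\big)$ if $k=2\ell+1$, and $f_Y(\lambda)=\frac{1}{2\ell}\Big(\sum_{j=-\ell+1}^{\ell-1}f_X\big(\frac{\lambda-2\pi j}{2\ell}\big)+f_X\big(\frac{\lambda-2\pi\ell\,\mathrm{sgn}(\lambda)}{2\ell}\big)\Big)$ if $k=2\ell$. *)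

theory Defs
  imports "HOL-Analysis.Analysis"
begin

definition circ_near :: "real \<Rightarrow> real \<Rightarrow> real \<Rightarrow> bool" where
  "circ_near x0 \<epsilon> x \<longleftrightarrow> (\<exists>m::int. \<bar>x - x0 - 2 * pi * of_int m\<bar> < \<epsilon>)"

definition singular_freq :: "(real \<Rightarrow> real) \<Rightarrow> real \<Rightarrow> bool" where
  "singular_freq f x0 \<longleftrightarrow> x0 \<in> {-pi..<pi} \<and>
     (\<forall>\<epsilon>>0. \<not> (\<exists>B. \<forall>x\<in>{-pi..<pi}. circ_near x0 \<epsilon> x \<longrightarrow> \<bar>f x\<bar> \<le> B))"

definition singular_freqs :: "(real \<Rightarrow> real) \<Rightarrow> real set" where
  "singular_freqs f = {x. singular_freq f x}"

text \<open>Spectral density of the deterministically sampled process Y_n = X_(kn).\<close>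
definition sampled_density :: "nat \<Rightarrow> (real \<Rightarrow> real) \<Rightarrow> real \<Rightarrow> real" where
  "sampled_density k f x =
     (let l = int (k div 2) in
      if odd k then
        (1 / real k) * (\<Sum>j\<in>{-l..l}. f ((x - 2 * pi * of_int j) / real k))
      else
        (1 / real k) * ((\<Sum>j\<in>{-l+1..l-1}. f ((x - 2 * pi * of_int j) / real k))
                        + f ((x - 2 * pi * of_int l * sgn x) / real k)))"

end

theory Submission
  imports Defs
begin

definition wrap :: "real \<Rightarrow> real" where
  "wrap y = y - 2*pi* of_int \<lfloor>(y+pi)/(2*pi)\<rfloor>"

lemma wrap_range: "wrap y \<in> {-pi..<pi}"
proof -
  let ?z = "(y+pi)/(2*pi)"
  have a: "of_int \<lfloor>?z\<rfloor> \<le> ?z" and b: "?z < of_int \<lfloor>?z\<rfloor> + 1"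
    using floor_correct[of ?z] by auto
  have e: "2*pi*?z = y + pi" by simp
  have "2*pi* of_int \<lfloor>?z\<rfloor> \<le> 2*pi*?z" using a pi_gt_zero by (intro mult_left_mono) auto
  moreover have "2*pi*?z < 2*pi*(of_int \<lfloor>?z\<rfloor> + 1)" using b pi_gt_zero by (intro mult_strict_left_mono) auto
  ultimately have "2*pi* of_int \<lfloor>?z\<rfloor> \<le> y + pi" "y + pi < 2*pi* of_int \<lfloor>?z\<rfloor> + 2*pi"
    unfolding e by (auto simp: algebra_simps)
  then show ?thesis unfolding wrap_def by auto
qed

lemma wrap_shift: "\<exists>n::int. wrap y = y - 2*pi* of_int n"
  unfolding wrap_def by blast

lemma wrap_id: "x \<in> {-pi..<pi} \<Longrightarrow> wrap x = x"
proof -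
  assume x: "x \<in> {-pi..<pi}"
  have p: "2*pi > 0" using pi_gt_zero by simp
  have "0 \<le> (x+pi)/(2*pi)" using x p by (intro divide_nonneg_pos) auto
  moreover have "(x+pi)/(2*pi) < 1" using x p by (subst pos_divide_less_eq[OF p]) auto
  ultimately have "\<lfloor>(x+pi)/(2*pi)\<rfloor> = 0" unfolding floor_eq_iff by simp
  then show ?thesis unfolding wrap_def by simp
qed

lemma wrap_periodic: "wrap (y + 2*pi* of_int n) = wrap y"
proof -
  have p: "2*pi \<noteq> 0" using pi_gt_zero by simp
  have "(y+pi)/(2*pi) + of_int n = ((y+pi) + of_int n*(2*pi))/(2*pi)"
    by (rule divide_add_eq_iff[OF p])
  also have "\<dots> = (y + 2*pi* of_int n + pi)/(2*pi)" by (simp add: algebra_simps)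
  finally have eq: "(y + 2*pi* of_int n + pi)/(2*pi) = (y+pi)/(2*pi) + of_int n" by (rule sym)
  have "\<lfloor>(y + 2*pi* of_int n + pi)/(2*pi)\<rfloor> = \<lfloor>(y+pi)/(2*pi)\<rfloor> + n"
    unfolding eq by (rule floor_add_int[symmetric])
  then show ?thesis unfolding wrap_def by (simp add: algebra_simps)
qed

lemma wrap_eq_iff: "wrap a = wrap b \<longleftrightarrow> (\<exists>n::int. a - b = 2*pi* of_int n)"
proof
  assume h: "wrap a = wrap b"
  obtain n m where "wrap a = a - 2*pi* of_int n" "wrap b = b - 2*pi* of_int m"
    using wrap_shift by metis
  with h have "a - b = 2*pi* of_int (n - m)" by (simp add: algebra_simps)
  then show "\<exists>n::int. a - b = 2*pi* of_int n" by blast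
next
  assume "\<exists>n::int. a - b = 2*pi* of_int n"
  then obtain n where "a = b + 2*pi* of_int n" by (auto simp: algebra_simps)
  then show "wrap a = wrap b" by (simp add: wrap_periodic)
qed

lemma circ_near_mono: "circ_near t e x \<Longrightarrow> e \<le> e' \<Longrightarrow> circ_near t e' x"
  unfolding circ_near_def using less_le_trans by blast

lemma finite_unif:
  assumes "finite C" "\<forall>t\<in>C. \<exists>e>0. \<exists>B. \<forall>x\<in>{-pi..<pi}. circ_near t e x \<longrightarrow> \<bar>f x\<bar> \<le> B"
  shows "\<exists>e>0. \<exists>B. \<forall>t\<in>C. \<forall>x\<in>{-pi..<pi}. circ_near t e x \<longrightarrow> \<bar>f x\<bar> \<le> (B::real)"
  using assms
proof (induction C rule: finite_induct)
  case empty
  then show ?case by (intro exI[of _ 1]) auto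
next
  case (insert t C)
  then obtain e1 B1 where e1: "e1 > 0" and h1: "\<forall>t\<in>C. \<forall>x\<in>{-pi..<pi}. circ_near t e1 x \<longrightarrow> \<bar>f x\<bar> \<le> B1"
    by auto
  from insert.prems obtain e2 B2 where e2: "e2 > 0" and h2: "\<forall>x\<in>{-pi..<pi}. circ_near t e2 x \<longrightarrow> \<bar>f x\<bar> \<le> B2"
    by auto
  show ?case
  proof (rule exI[of _ "min e1 e2"], rule conjI)
    show "min e1 e2 > 0" using e1 e2 by simp
  next
    show "\<exists>B. \<forall>s\<in>insert t C. \<forall>x\<in>{-pi..<pi}. circ_near s (min e1 e2) x \<longrightarrow> \<bar>f x\<bar> \<le> B"
    proof (rule exI[of _ "max B1 B2"], intro ballI impI)
    fix s x assume s: "s \<in> insert t C" and x: "x \<in> {-pi..<pi}" and c: "circ_near s (min e1 e2) x"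
    show "\<bar>f x\<bar> \<le> max B1 B2"
    proof (cases "s = t")
      case True
      then have "circ_near t e2 x" using c circ_near_mono by (metis min.cobounded2)
      then show ?thesis using h2 x by fastforce
    next
      case False
      then have "s \<in> C" using s by auto
      moreover have "circ_near s e1 x" using c circ_near_mono by (metis min.cobounded1)
      ultimately show ?thesis using h1 x by fastforce
    qed
    qed
  qed
qed

lemma arg_in: "real k > 0 \<Longrightarrow> -(real k*pi) \<le> z \<Longrightarrow> z < real k*pi \<Longrightarrow> z / real k \<in> {-pi..<pi}"
proof -
  assume k: "real k > 0" and a: "-(real k*pi) \<le> z" and b: "z < real k*pi"
  have "-pi \<le> z / real k" using a k by (simp add: pos_le_divide_eq mult.commute)
  moreover have "z / real k < pi" using b k by (simp add: pos_divide_less_eq mult.commute)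
  ultimately show ?thesis by simp
qed

lemma real_k_odd: "odd k \<Longrightarrow> real k = 2 * of_int (int (k div 2)) + 1"
proof -
  assume "odd k"
  then have "k = 2*(k div 2) + 1" by presburger
  then have "real k = real (2*(k div 2) + 1)" by simp
  then show ?thesis by simp
qed

lemma real_k_even: "even k \<Longrightarrow> real k = 2 * of_int (int (k div 2))"
proof -
  assume "even k"
  then have "k = 2*(k div 2)" by presburger
  then have "real k = real (2*(k div 2))" by simp
  then show ?thesis by simp
qed

lemma two_pi_mono: "(j::int) \<le> l \<Longrightarrow> 2*pi* of_int j \<le> 2*pi* of_int l"
  using pi_gt_zero by (intro mult_left_mono) auto

lemma arg_odd:
  assumes "odd k" "x \<in> {-pi..<pi}" "j \<in> {-int (k div 2)..int (k div 2)}"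
  shows "(x - 2*pi* of_int j)/real k \<in> {-pi..<pi}"
proof -
  define l where "l = int (k div 2)"
  have kr: "real k = 2 * of_int l + 1" using real_k_odd[OF assms(1)] l_def by simp
  have j1: "2*pi* of_int j \<le> 2*pi* of_int l" using assms(3) two_pi_mono l_def by auto
  have j2: "-(2*pi* of_int l) \<le> 2*pi* of_int j" using assms(3) two_pi_mono[of "-l" j] l_def by simp
  have kp: "real k * pi = 2*pi* of_int l + pi" using kr by (simp add: algebra_simps)
  have kpos: "real k > 0" using assms(1) by (cases k) auto
  have xb: "-pi \<le> x" "x < pi" using assms(2) by auto
  have "-(real k*pi) \<le> x - 2*pi* of_int j" using xb j1 kp by linarith
  moreover have "x - 2*pi* of_int j < real k*pi" using xb j2 kp by linarith
  ultimately show ?thesis by (rule arg_in[OF kpos])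
qed

lemma arg_even:
  assumes "even k" "k \<ge> 1" "x \<in> {-pi..<pi}" "j \<in> {-int (k div 2)+1..int (k div 2)-1}"
  shows "(x - 2*pi* of_int j)/real k \<in> {-pi..<pi}"
proof -
  define l where "l = int (k div 2)"
  have kr: "real k = 2 * of_int l" using real_k_even[OF assms(1)] l_def by simp
  have j1: "2*pi* of_int j \<le> 2*pi* of_int (l - 1)" using assms(4) two_pi_mono l_def by auto
  have j2: "2*pi* of_int (-l+1) \<le> 2*pi* of_int j" using assms(4) two_pi_mono l_def by auto
  have kp: "real k * pi = 2*pi* of_int l" using kr by (simp add: algebra_simps)
  have kpos: "real k > 0" using assms(2) by simp
  have xb: "-pi \<le> x" "x < pi" using assms(3) by auto
  have j1': "2*pi* of_int j \<le> 2*pi* of_int l - 2*pi" using j1 by (simp add: algebra_simps)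
  have j2': "2*pi - 2*pi* of_int l \<le> 2*pi* of_int j" using j2 by (simp add: algebra_simps)
  have "-(real k*pi) \<le> x - 2*pi* of_int j" using xb j1' kp pi_gt_zero by linarith
  moreover have "x - 2*pi* of_int j < real k*pi" using xb j2' kp pi_gt_zero by linarith
  ultimately show ?thesis by (rule arg_in[OF kpos])
qed

lemma arg_sgn:
  assumes "even k" "k \<ge> 1" "x \<in> {-pi..<pi}"
  shows "(x - 2*pi* of_int (int (k div 2)) * sgn x)/real k \<in> {-pi..<pi}"
proof -
  define l where "l = int (k div 2)"
  have kr: "real k = 2 * of_int l" using real_k_even[OF assms(1)] l_def by simp
  have l1: "l \<ge> 1" using assms(1,2) l_def by presburger
  have lp: "2*pi \<le> 2*pi* of_int l" using two_pi_mono[OF l1] by simp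
  have kp: "real k * pi = 2*pi* of_int l" using kr by (simp add: algebra_simps)
  have kpos: "real k > 0" using assms(2) by simp
  have xb: "-pi \<le> x" "x < pi" using assms(3) by auto
  consider "x > 0" | "x < 0" | "x = 0" by linarith
  then show ?thesis
  proof cases
    case 1
    then have e: "2*pi* of_int l * sgn x = 2*pi* of_int l" by simp
    have "-(real k*pi) \<le> x - 2*pi* of_int l * sgn x" unfolding e using kp 1 by linarith
    moreover have "x - 2*pi* of_int l * sgn x < real k*pi" unfolding e using kp 1 xb lp pi_gt_zero by linarith
    ultimately show ?thesis unfolding l_def[symmetric] by (rule arg_in[OF kpos])
  next
    case 2
    then have e: "2*pi* of_int l * sgn x = -(2*pi* of_int l)" by simp
    have "-(real k*pi) \<le> x - 2*pi* of_int l * sgn x" unfolding e using kp 2 xb lp pi_gt_zero by linarith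
    moreover have "x - 2*pi* of_int l * sgn x < real k*pi" unfolding e using kp 2 by linarith
    ultimately show ?thesis unfolding l_def[symmetric] by (rule arg_in[OF kpos])
  next
    case 3
    have "(x - 2*pi* of_int (int (k div 2)) * sgn x)/real k = 0" using 3 by simp
    show ?thesis unfolding \<open>(x - 2*pi* of_int (int (k div 2)) * sgn x)/real k = 0\<close> using pi_gt_zero by simp
  qed
qed

lemma sd_odd: "odd k \<Longrightarrow> sampled_density k f x =
   (1 / real k) * (\<Sum>j\<in>{-int (k div 2)..int (k div 2)}. f ((x - 2 * pi * of_int j) / real k))"
  unfolding sampled_density_def Let_def by simp

lemma sd_even: "even k \<Longrightarrow> sampled_density k f x =
   (1 / real k) * ((\<Sum>j\<in>{-int (k div 2)+1..int (k div 2)-1}. f ((x - 2 * pi * of_int j) / real k))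
                        + f ((x - 2 * pi * of_int (int (k div 2)) * sgn x) / real k))"
  unfolding sampled_density_def Let_def by simp

lemma card_sym_le: "card {-int (k div 2)..int (k div 2)} \<le> k + 1"
proof -
  have "card {-int (k div 2)..int (k div 2)} = nat (2 * int (k div 2) + 1)" by simp
  also have "\<dots> = 2 * (k div 2) + 1" by simp
  also have "\<dots> \<le> k + 1" by simp
  finally show ?thesis .
qed

lemma sd_upper:
  assumes k: "k \<ge> 1" and x: "x \<in> {-pi..<pi}" and B: "B \<ge> 0"
    and h: "\<And>a. a \<in> {-pi..<pi} \<Longrightarrow> (\<exists>i::int. real k * a = x + 2*pi* of_int i) \<Longrightarrow> 0 \<le> f a \<and> f a \<le> B"
  shows "0 \<le> sampled_density k f x \<and> sampled_density k f x \<le> (real k + 2) * B"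
proof -
  define l where "l = int (k div 2)"
  have kpos: "real k > 0" using k by simp
  have kinv: "0 \<le> 1/real k" "1/real k \<le> 1" using k by auto
  have ints: "\<And>j::int. real k * ((x - 2*pi* of_int j)/real k) = x + 2*pi* of_int (-j)"
    using kpos by simp
  have cl: "real (card {-l..l}) \<le> real k + 1" using card_sym_le[of k] unfolding l_def[symmetric]
    by (metis of_nat_1 of_nat_add of_nat_le_iff)
  show ?thesis
  proof (cases "odd k")
    case True
    let ?S = "\<Sum>j\<in>{-l..l}. f ((x - 2 * pi * of_int j) / real k)"
    have t: "\<And>j. j\<in>{-l..l} \<Longrightarrow> 0 \<le> f ((x - 2 * pi * of_int j) / real k) \<and> f ((x - 2 * pi * of_int j) / real k) \<le> B"
    proof -
      fix j assume "j \<in> {-l..l}"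
      then have "(x - 2 * pi * of_int j) / real k \<in> {-pi..<pi}" using arg_odd[OF True x] l_def by simp
      then show "0 \<le> f ((x - 2 * pi * of_int j) / real k) \<and> f ((x - 2 * pi * of_int j) / real k) \<le> B"
        using h ints by blast
    qed
    have s0: "0 \<le> ?S" using t by (intro sum_nonneg) auto
    have s1: "?S \<le> real (card {-l..l}) * B" by (rule sum_bounded_above) (use t in auto)
    have s2: "real (card {-l..l}) * B \<le> (real k + 2) * B" using cl B by (intro mult_right_mono) auto
    have e: "sampled_density k f x = (1/real k) * ?S" using sd_odd[OF True] l_def by simp
    have "(1/real k) * ?S \<le> ?S" using s0 kinv by (rule mult_left_le_one_le)
    then show ?thesis unfolding e using s0 s1 s2 kinv by auto
  next
    case False
    let ?S = "\<Sum>j\<in>{-l+1..l-1}. f ((x - 2 * pi * of_int j) / real k)"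
    let ?T = "f ((x - 2 * pi * of_int l * sgn x) / real k)"
    have t: "\<And>j. j\<in>{-l+1..l-1} \<Longrightarrow> 0 \<le> f ((x - 2 * pi * of_int j) / real k) \<and> f ((x - 2 * pi * of_int j) / real k) \<le> B"
    proof -
      fix j assume "j \<in> {-l+1..l-1}"
      then have "(x - 2 * pi * of_int j) / real k \<in> {-pi..<pi}" using arg_even[OF _ k x] False l_def by simp
      then show "0 \<le> f ((x - 2 * pi * of_int j) / real k) \<and> f ((x - 2 * pi * of_int j) / real k) \<le> B"
        using h ints by blast
    qed
    have tT: "0 \<le> ?T \<and> ?T \<le> B"
    proof -
      have r: "(x - 2 * pi * of_int l * sgn x) / real k \<in> {-pi..<pi}" using arg_sgn[OF _ k x] False l_def by simp
      define s :: int where "s = (if x > 0 then 1 else if x < 0 then -1 else 0)"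
      have ss: "sgn x = of_int s" unfolding s_def by (simp add: sgn_if)
      have "real k * ((x - 2 * pi * of_int l * sgn x) / real k) = x - 2 * pi * of_int l * sgn x"
        using kpos by simp
      also have "\<dots> = x + 2*pi* of_int (- (l * s))" unfolding ss by simp
      finally have "\<exists>i::int. real k * ((x - 2 * pi * of_int l * sgn x) / real k) = x + 2*pi* of_int i" by blast
      then show ?thesis using h r by blast
    qed
    have s0: "0 \<le> ?S" using t by (intro sum_nonneg) auto
    have s1: "?S \<le> real (card {-l+1..l-1}) * B" by (rule sum_bounded_above) (use t in auto)
    have "card {-l+1..l-1} \<le> card {-l..l}" by (intro card_mono) auto
    then have "real (card {-l+1..l-1}) \<le> real k + 1" using cl by linarith
    then have s2: "real (card {-l+1..l-1}) * B \<le> (real k + 1) * B" using B by (intro mult_right_mono) auto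
    have e: "sampled_density k f x = (1/real k) * (?S + ?T)" using sd_even[OF _] False l_def by simp
    have "(1/real k) * (?S + ?T) \<le> ?S + ?T" using s0 tT kinv by (intro mult_left_le_one_le) auto
    then show ?thesis unfolding e using s0 s1 s2 kinv tT by (auto simp: algebra_simps)
  qed
qed

lemma sd_lower:
  assumes nonneg: "\<forall>x\<in>{-pi..<pi}. f x \<ge> 0" and k: "k \<ge> 1" and t1: "-pi < t" and t2: "t < pi"
  shows "f t / real k \<le> sampled_density k f (wrap (real k * t))"
proof -
  define x where "x = wrap (real k * t)"
  define a where "a = \<lfloor>(real k * t + pi)/(2*pi)\<rfloor>"
  define l where "l = int (k div 2)"
  have kpos: "real k > 0" using k by simp
  have kinv: "0 \<le> 1/real k" using k by auto
  have xa: "x = real k * t - 2*pi* of_int a" unfolding x_def a_def wrap_def by simp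
  have xr: "x \<in> {-pi..<pi}" unfolding x_def by (rule wrap_range)
  then have xb: "-pi \<le> x" "x < pi" by auto
  have kt1: "real k * (-pi) < real k * t" using t1 kpos by (rule mult_strict_left_mono)
  have kt2: "real k * t < real k * pi" using t2 kpos by (rule mult_strict_left_mono)
  have "pi * (2 * of_int a) < pi * (real k + 1)" using xa xb kt1 kt2 by (simp add: algebra_simps)
  then have "2 * of_int a < real k + 1" using pi_gt_zero by (simp only: mult_less_cancel_left_pos)
  then have "real_of_int (2*a) < real_of_int (int k + 1)" by simp
  then have a1: "2*a < int k + 1" by (simp only: of_int_less_iff)
  have "pi * (- real k - 1) < pi * (2 * of_int a)" using xa xb kt1 kt2 by (simp add: algebra_simps)
  then have "- real k - 1 < 2 * of_int a" using pi_gt_zero by (simp only: mult_less_cancel_left_pos)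
  then have "real_of_int (- int k - 1) < real_of_int (2*a)" by simp
  then have a2: "- int k - 1 < 2*a" by (simp only: of_int_less_iff)
  have targ: "(x - 2 * pi * of_int (-a)) / real k = t" using xa kpos by simp
  have ft: "0 \<le> f t" using nonneg t1 t2 by auto
  show ?thesis
  proof (cases "odd k")
    case True
    have kl: "int k = 2*l+1" unfolding l_def using True by presburger
    have mem: "-a \<in> {-l..l}" using a1 a2 kl by auto
    have nn: "\<And>j. j \<in> {-l..l} \<Longrightarrow> 0 \<le> f ((x - 2 * pi * of_int j) / real k)"
      using nonneg arg_odd[OF True xr] l_def by auto
    have "f t \<le> (\<Sum>j\<in>{-l..l}. f ((x - 2 * pi * of_int j) / real k))"
      using member_le_sum[OF mem, of "\<lambda>j. f ((x - 2 * pi * of_int j) / real k)"] nn targ by auto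
    then have "(1/real k) * f t \<le> (1/real k) * (\<Sum>j\<in>{-l..l}. f ((x - 2 * pi * of_int j) / real k))"
      using kinv by (rule mult_left_mono)
    then show ?thesis unfolding x_def[symmetric] using sd_odd[OF True, of f x] l_def by simp
  next
    case False
    have ev: "even k" using False by simp
    have kl: "int k = 2*l" unfolding l_def using False by presburger
    have l1: "l \<ge> 1" unfolding l_def using False k by presburger
    let ?S = "\<Sum>j\<in>{-l+1..l-1}. f ((x - 2 * pi * of_int j) / real k)"
    let ?T = "f ((x - 2 * pi * of_int l * sgn x) / real k)"
    have nn: "\<And>j. j \<in> {-l+1..l-1} \<Longrightarrow> 0 \<le> f ((x - 2 * pi * of_int j) / real k)"
      using nonneg arg_even[OF ev k xr] l_def by auto
    have S0: "0 \<le> ?S" using nn by (intro sum_nonneg) auto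
    have T0: "0 \<le> ?T" using nonneg arg_sgn[OF ev k xr] l_def by auto
    have kr: "real k = 2 * of_int l" using kl by (metis of_int_of_nat_eq of_int_mult of_int_numeral)
    have main: "f t \<le> ?S + ?T"
    proof -
      consider "a = l" | "a = -l" | "-a \<in> {-l+1..l-1}" using a1 a2 kl by fastforce
      then show ?thesis
      proof cases
        case 1
        have "x < 0" using xa kt2 kr 1 by (simp add: algebra_simps)
        then have "(x - 2 * pi * of_int l * sgn x) / real k = t"
          using targ 1 by simp
        then show ?thesis using S0 by simp
      next
        case 2
        have "x > 0" using xa kt1 kr 2 by (simp add: algebra_simps)
        then have "(x - 2 * pi * of_int l * sgn x) / real k = t"
          using targ 2 by simp
        then show ?thesis using S0 by simp
      next
        case 3
        have "f t \<le> ?S"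
          using member_le_sum[OF 3, of "\<lambda>j. f ((x - 2 * pi * of_int j) / real k)"] nn targ by auto
        then show ?thesis using T0 by simp
      qed
    qed
    then have "(1/real k) * f t \<le> (1/real k) * (?S + ?T)"
      using kinv by (rule mult_left_mono)
    then show ?thesis unfolding x_def[symmetric] using sd_even[OF ev, of f x] l_def by simp
  qed
qed

lemma D1:
  assumes nonneg: "\<forall>x\<in>{-pi..<pi}. f x \<ge> 0" and k: "k \<ge> 1" and sf: "singular_freq f lam"
  shows "singular_freq (sampled_density k f) (wrap (real k * lam))"
proof -
  have unb: "\<forall>e>0. \<not>(\<exists>B. \<forall>x\<in>{-pi..<pi}. circ_near lam e x \<longrightarrow> \<bar>f x\<bar> \<le> B)"
    using sf unfolding singular_freq_def by auto
  define mu where "mu = wrap (real k * lam)"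
  have kpos: "real k > 0" using k by simp
  show ?thesis unfolding singular_freq_def mu_def[symmetric]
  proof (intro conjI allI impI notI)
    show "mu \<in> {-pi..<pi}" unfolding mu_def by (rule wrap_range)
    fix e :: real assume e: "e > 0"
    assume "\<exists>B. \<forall>x\<in>{-pi..<pi}. circ_near mu e x \<longrightarrow> \<bar>sampled_density k f x\<bar> \<le> B"
    then obtain B where hB: "\<forall>x\<in>{-pi..<pi}. circ_near mu e x \<longrightarrow> \<bar>sampled_density k f x\<bar> \<le> B" by blast
    have ek: "e / real k > 0" using e kpos by simp
    have "\<not>(\<exists>B. \<forall>x\<in>{-pi..<pi}. circ_near lam (e / real k) x \<longrightarrow> \<bar>f x\<bar> \<le> B)" using unb ek by blast
    then obtain t where t: "t \<in> {-pi..<pi}" "circ_near lam (e / real k) t"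
      and ft: "\<not> \<bar>f t\<bar> \<le> max (real k * B) \<bar>f (-pi)\<bar>" by blast
    have tne: "t \<noteq> -pi" using ft by auto
    then have t1: "-pi < t" and t2: "t < pi" using t(1) by auto
    have f0: "0 \<le> f t" using nonneg t(1) by auto
    have fkB: "real k * B < f t" using ft f0 by auto
    have low: "f t / real k \<le> sampled_density k f (wrap (real k * t))"
      by (rule sd_lower[OF nonneg k t1 t2])
    obtain m :: int where m: "\<bar>t - lam - 2*pi* of_int m\<bar> < e / real k"
      using t(2) unfolding circ_near_def by blast
    obtain a :: int where a: "wrap (real k * t) = real k * t - 2*pi* of_int a" using wrap_shift by blast
    obtain b :: int where b: "mu = real k * lam - 2*pi* of_int b" using wrap_shift unfolding mu_def by blast
    have "wrap (real k * t) - mu - 2*pi* of_int (b - a + int k * m) = real k * (t - lam - 2*pi* of_int m)"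
      unfolding a b by (simp add: algebra_simps)
    moreover have "\<bar>real k * (t - lam - 2*pi* of_int m)\<bar> < e"
    proof -
      have "\<bar>real k * (t - lam - 2*pi* of_int m)\<bar> = real k * \<bar>t - lam - 2*pi* of_int m\<bar>"
        using kpos by (simp add: abs_mult)
      also have "\<dots> < real k * (e / real k)" using m kpos by (rule mult_strict_left_mono)
      also have "\<dots> = e" using kpos by simp
      finally show ?thesis .
    qed
    ultimately have "circ_near mu e (wrap (real k * t))" unfolding circ_near_def by metis
    then have "\<bar>sampled_density k f (wrap (real k * t))\<bar> \<le> B" using hB wrap_range by blast
    moreover have "B < f t / real k" using fkB kpos by (simp add: pos_less_divide_eq mult.commute)
    ultimately show False using low by linarith
  qed
qed

lemma C_finite:
  assumes k: "k \<ge> 1"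
  shows "finite {t \<in> {-pi..<pi}. \<exists>i::int. real k * t = mu + 2*pi* of_int i}"
proof -
  have kpos: "real k > 0" using k by simp
  have "{t \<in> {-pi..<pi}. \<exists>i::int. real k * t = mu + 2*pi* of_int i}
        \<subseteq> (\<lambda>i. wrap ((mu + 2*pi* of_int i) / real k)) ` {0..<int k}"
  proof
    fix t assume "t \<in> {t \<in> {-pi..<pi}. \<exists>i::int. real k * t = mu + 2*pi* of_int i}"
    then obtain i :: int where tr: "t \<in> {-pi..<pi}" and ti: "real k * t = mu + 2*pi* of_int i" by blast
    define r where "r = i mod int k"
    define q where "q = i div int k"
    have iq: "i = r + int k * q" unfolding r_def q_def by simp
    have r0: "r \<in> {0..<int k}" unfolding r_def using k by simp
    have e1: "real k * ((mu + 2*pi* of_int r) / real k + 2*pi* of_int q) = mu + 2*pi* of_int r + real k*(2*pi* of_int q)"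
      proof -
        have e0: "real k * ((mu + 2*pi* of_int r) / real k) = mu + 2*pi* of_int r" using kpos by simp
        show ?thesis by (simp only: distrib_left e0)
      qed
    have e2: "mu + 2*pi* of_int i = mu + 2*pi* of_int r + real k*(2*pi* of_int q)"
      unfolding iq by (simp add: algebra_simps)
    have "real k * t = real k * ((mu + 2*pi* of_int r) / real k + 2*pi* of_int q)"
      using ti e1 e2 by simp
    then have "t = (mu + 2*pi* of_int r) / real k + 2*pi* of_int q" using kpos by simp
    then have "wrap t = wrap ((mu + 2*pi* of_int r) / real k)" by (simp add: wrap_periodic)
    then have "t = wrap ((mu + 2*pi* of_int r) / real k)" using wrap_id[OF tr] by simp
    then show "t \<in> (\<lambda>i. wrap ((mu + 2*pi* of_int i) / real k)) ` {0..<int k}" using r0 by blast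
  qed
  then show ?thesis by (rule finite_subset) simp
qed

lemma D2:
  assumes nonneg: "\<forall>x\<in>{-pi..<pi}. f x \<ge> 0" and k: "k \<ge> 1"
    and sf: "singular_freq (sampled_density k f) mu"
  shows "\<exists>t. singular_freq f t \<and> wrap (real k * t) = mu"
proof (rule ccontr)
  assume nt: "\<not> (\<exists>t. singular_freq f t \<and> wrap (real k * t) = mu)"
  have mur: "mu \<in> {-pi..<pi}" and unb: "\<forall>e>0. \<not>(\<exists>B. \<forall>x\<in>{-pi..<pi}. circ_near mu e x \<longrightarrow> \<bar>sampled_density k f x\<bar> \<le> B)"
    using sf unfolding singular_freq_def by auto
  have kpos: "real k > 0" using k by simp
  define C where "C = {t \<in> {-pi..<pi}. \<exists>i::int. real k * t = mu + 2*pi* of_int i}"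
  have finC: "finite C" unfolding C_def by (rule C_finite[OF k])
  have "\<forall>t\<in>C. \<exists>e>0. \<exists>B. \<forall>x\<in>{-pi..<pi}. circ_near t e x \<longrightarrow> \<bar>f x\<bar> \<le> B"
  proof
    fix t assume "t \<in> C"
    then obtain i :: int where tr: "t \<in> {-pi..<pi}" and ti: "real k * t = mu + 2*pi* of_int i"
      unfolding C_def by blast
    have "wrap (real k * t) = wrap mu" unfolding ti by (rule wrap_periodic)
    then have "wrap (real k * t) = mu" using wrap_id[OF mur] by simp
    then have "\<not> singular_freq f t" using nt by blast
    then show "\<exists>e>0. \<exists>B. \<forall>x\<in>{-pi..<pi}. circ_near t e x \<longrightarrow> \<bar>f x\<bar> \<le> B"
      using tr unfolding singular_freq_def by blast
  qed
  then obtain e0 B0 where e0: "e0 > 0" and hB0: "\<forall>t\<in>C. \<forall>x\<in>{-pi..<pi}. circ_near t e0 x \<longrightarrow> \<bar>f x\<bar> \<le> B0"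
    using finite_unif[OF finC] by blast
  define B1 where "B1 = max B0 0"
  have B1: "B1 \<ge> 0" unfolding B1_def by simp
  have "\<forall>x\<in>{-pi..<pi}. circ_near mu (real k * e0) x \<longrightarrow> \<bar>sampled_density k f x\<bar> \<le> (real k + 2) * B1"
  proof (intro ballI impI)
    fix x assume xr: "x \<in> {-pi..<pi}" and cn: "circ_near mu (real k * e0) x"
    then obtain m :: int where m: "\<bar>x - mu - 2*pi* of_int m\<bar> < real k * e0"
      unfolding circ_near_def by blast
    have "0 \<le> sampled_density k f x \<and> sampled_density k f x \<le> (real k + 2) * B1"
    proof (rule sd_upper[OF k xr B1])
      fix a assume ar: "a \<in> {-pi..<pi}" and "\<exists>i::int. real k * a = x + 2*pi* of_int i"
      then obtain i :: int where ai: "real k * a = x + 2*pi* of_int i" by blast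
      define y where "y = (mu + 2*pi* of_int (m + i)) / real k"
      obtain c :: int where c: "wrap y = y - 2*pi* of_int c" using wrap_shift by blast
      have ky: "real k * y = mu + 2*pi* of_int (m + i)" unfolding y_def using kpos by simp
      have "real k * wrap y = mu + 2*pi* of_int (m + i - int k * c)"
        unfolding c using ky by (simp add: algebra_simps)
      then have wC: "wrap y \<in> C" unfolding C_def using wrap_range by blast
      have "real k * (a - y) = x - mu - 2*pi* of_int m"
        using ai ky by (simp add: algebra_simps)
      then have "\<bar>real k * (a - y)\<bar> < real k * e0" using m by simp
      moreover have "\<bar>real k * (a - y)\<bar> = real k * \<bar>a - y\<bar>" using kpos by (simp add: abs_mult)
      ultimately have "real k * \<bar>a - y\<bar> < real k * e0" by simp
      then have "\<bar>a - y\<bar> < e0" using kpos by (simp only: mult_less_cancel_left_pos)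
      then have "\<bar>a - wrap y - 2*pi* of_int c\<bar> < e0" unfolding c by simp
      then have "circ_near (wrap y) e0 a" unfolding circ_near_def by blast
      then have "\<bar>f a\<bar> \<le> B0" using hB0 wC ar by blast
      moreover have "0 \<le> f a" using nonneg ar by auto
      ultimately show "0 \<le> f a \<and> f a \<le> B1" unfolding B1_def by auto
    qed
    then show "\<bar>sampled_density k f x\<bar> \<le> (real k + 2) * B1" by auto
  qed
  moreover have "real k * e0 > 0" using kpos e0 by simp
  ultimately show False using unb by blast
qed

lemma key:
  assumes nonneg: "\<forall>x\<in>{-pi..<pi}. f x \<ge> 0" and k: "k \<ge> 1"
  shows "singular_freqs (sampled_density k f) = (\<lambda>t. wrap (real k * t)) ` singular_freqs f"
proof
  show "singular_freqs (sampled_density k f) \<subseteq> (\<lambda>t. wrap (real k * t)) ` singular_freqs f"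
  proof
    fix mu assume "mu \<in> singular_freqs (sampled_density k f)"
    then obtain t where "singular_freq f t" "wrap (real k * t) = mu"
      using D2[OF nonneg k] unfolding singular_freqs_def by blast
    then show "mu \<in> (\<lambda>t. wrap (real k * t)) ` singular_freqs f" unfolding singular_freqs_def by blast
  qed
next
  show "(\<lambda>t. wrap (real k * t)) ` singular_freqs f \<subseteq> singular_freqs (sampled_density k f)"
    using D1[OF nonneg k] unfolding singular_freqs_def by blast
qed

lemma phi_eq:
  assumes k: "k \<ge> 1"
  shows "wrap (real k * x0) = wrap (real k * x1) \<longleftrightarrow> (\<exists>j::int. x0 - x1 = 2 * pi * of_int j / real k)"
proof -
  have kpos: "real k > 0" using k by simp
  have "\<And>j::int. real k * x0 - real k * x1 = 2*pi* of_int j \<longleftrightarrow> x0 - x1 = 2 * pi * of_int j / real k"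
  proof -
    fix j :: int
    have "real k * x0 - real k * x1 = real k * (x0 - x1)" by (simp add: algebra_simps)
    then show "real k * x0 - real k * x1 = 2*pi* of_int j \<longleftrightarrow> x0 - x1 = 2 * pi * of_int j / real k"
      using kpos by (simp add: eq_divide_eq mult.commute)
  qed
  then show ?thesis unfolding wrap_eq_iff by blast
qed

theorem proposition4p2:
  fixes fX :: "real \<Rightarrow> real" and k :: nat
  assumes nonneg: "\<forall>x\<in>{-pi..<pi}. fX x \<ge> 0"
    and integrable: "set_integrable lborel {-pi..<pi} fX"
    and fin: "finite (singular_freqs fX)"
    and NX: "card (singular_freqs fX) \<ge> 1"
    and k: "k \<ge> 1"
  shows "(finite (singular_freqs (sampled_density k fX))
         \<and> 1 \<le> card (singular_freqs (sampled_density k fX))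
         \<and> card (singular_freqs (sampled_density k fX)) \<le> card (singular_freqs fX))
         \<and> (card (singular_freqs (sampled_density k fX)) < card (singular_freqs fX) \<longleftrightarrow>
         (\<exists>x0 x1. x0 \<in> singular_freqs fX \<and> x1 \<in> singular_freqs fX \<and> x0 \<noteq> x1 \<and>
            (\<exists>j::int. x0 - x1 = 2 * pi * of_int j / real k)))"
proof -
  define S where "S = singular_freqs fX"
  define phi where "phi = (\<lambda>t. wrap (real k * t))"
  have SY: "singular_freqs (sampled_density k fX) = phi ` S"
    unfolding S_def phi_def by (rule key[OF nonneg k])
  have finS: "finite S" using fin S_def by simp
  have ne: "S \<noteq> {}" using NX S_def by auto
  have f1: "finite (phi ` S)" using finS by simp
  have f2: "1 \<le> card (phi ` S)" using f1 ne by (simp add: Suc_le_eq card_gt_0_iff)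
  have f3: "card (phi ` S) \<le> card S" using finS by (rule card_image_le)
  have f4: "card (phi ` S) < card S \<longleftrightarrow> \<not> inj_on phi S"
  proof
    assume "card (phi ` S) < card S"
    then show "\<not> inj_on phi S" using card_image by force
  next
    assume "\<not> inj_on phi S"
    then have "card (phi ` S) \<noteq> card S" using eq_card_imp_inj_on[OF finS] by blast
    then show "card (phi ` S) < card S" using f3 by simp
  qed
  have f5: "\<not> inj_on phi S \<longleftrightarrow> (\<exists>x0 x1. x0 \<in> S \<and> x1 \<in> S \<and> x0 \<noteq> x1 \<and>
            (\<exists>j::int. x0 - x1 = 2 * pi * of_int j / real k))"
    unfolding inj_on_def phi_def phi_eq[OF k] by blast
  show ?thesis unfolding SY S_def[symmetric] using f1 f2 f3 f4 f5 by blast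
qed

end
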